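(* For any graph function $\alpha$ on a strongly connected digraph $G$ with $n$ vertices, we have $h\le(n-1)\sum_v\rho^R_v$, where $h=\max_v y_v-\min_v y_v$.
   Context: $G$ is a strongly connected directed graph on vertex set $\{1,\dots,n\}$ (self-loops allowed); a graph function assigns a real weight $\alpha_{uv}$ to each edge. $\alpha_v^{\text{in}}=\max_{u:(u,v)\in G}\alpha_{uv}$, $\alpha_v^{\text{out}}=\max_{w:(v,w)\in G}\alpha_{vw}$, $\rho^R_v=\max\{0,\alpha_v^{\text{out}}-\alpha_v^{\text{in}}\}$. A raising operation at $v$: if $\rho^R_v>0$ add $\rho^R_v/2$ to each incoming edge weight $\alpha_{uv}$ ($u\ne v$) and subtract it from each outgoing $\alpha_{vw}$ ($w\neq v$); otherwise do nothing. Starting from $\alpha$, for any infinite sequence of raising operations in which every vertex occurs infinitely often, the cumulative amount $r_v(t)$ by which each vertex has been raised (sum of the increments $\rho^R_v/2$ over operations at $v$) converges to a limit vector $r^*$ that does not depend on the sequence. The heights are $y_v=-r^*_v$. *)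

theory Defs
  imports Complex_Main
begin

text \<open>A digraph on vertex set {1..n} is an edge set E of pairs; a graph function
  is a weight function alpha on pairs (only values on edges of E matter).\<close>

definition strongly_connected :: "nat \<Rightarrow> (nat \<times> nat) set \<Rightarrow> bool" where
  "strongly_connected n E \<longleftrightarrow> E \<subseteq> {1..n} \<times> {1..n} \<and>
     (\<forall>u\<in>{1..n}. \<forall>v\<in>{1..n}. (u, v) \<in> E\<^sup>*)"

definition alpha_in :: "(nat \<times> nat) set \<Rightarrow> (nat \<Rightarrow> nat \<Rightarrow> real) \<Rightarrow> nat \<Rightarrow> real" where
  "alpha_in E \<alpha> v = Max {\<alpha> u v | u. (u, v) \<in> E}"

definition alpha_out :: "(nat \<times> nat) set \<Rightarrow> (nat \<Rightarrow> nat \<Rightarrow> real) \<Rightarrow> nat \<Rightarrow> real" where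
  "alpha_out E \<alpha> v = Max {\<alpha> v w | w. (v, w) \<in> E}"

definition rhoR :: "(nat \<times> nat) set \<Rightarrow> (nat \<Rightarrow> nat \<Rightarrow> real) \<Rightarrow> nat \<Rightarrow> real" where
  "rhoR E \<alpha> v = max 0 (alpha_out E \<alpha> v - alpha_in E \<alpha> v)"

definition raise_op :: "(nat \<times> nat) set \<Rightarrow> (nat \<Rightarrow> nat \<Rightarrow> real) \<Rightarrow> nat \<Rightarrow> (nat \<Rightarrow> nat \<Rightarrow> real)" where
  "raise_op E \<alpha> v = (\<lambda>a b.
     if (a, b) \<in> E \<and> b = v \<and> a \<noteq> v then \<alpha> a b + rhoR E \<alpha> v / 2
     else if (a, b) \<in> E \<and> a = v \<and> b \<noteq> v then \<alpha> a b - rhoR E \<alpha> v / 2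
     else \<alpha> a b)"

fun alpha_seq :: "(nat \<times> nat) set \<Rightarrow> (nat \<Rightarrow> nat \<Rightarrow> real) \<Rightarrow> (nat \<Rightarrow> nat) \<Rightarrow> nat \<Rightarrow> (nat \<Rightarrow> nat \<Rightarrow> real)" where
  "alpha_seq E \<alpha> s 0 = \<alpha>"
| "alpha_seq E \<alpha> s (Suc t) = raise_op E (alpha_seq E \<alpha> s t) (s t)"

definition raised :: "(nat \<times> nat) set \<Rightarrow> (nat \<Rightarrow> nat \<Rightarrow> real) \<Rightarrow> (nat \<Rightarrow> nat) \<Rightarrow> nat \<Rightarrow> nat \<Rightarrow> real" where
  "raised E \<alpha> s v t = (\<Sum>i<t. if s i = v then rhoR E (alpha_seq E \<alpha> s i) v / 2 else 0)"

end

theory Submission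
  imports Defs "HOL-Library.Infinite_Set"
begin

definition gin :: "(nat \<times> nat) set \<Rightarrow> (nat \<Rightarrow> nat \<Rightarrow> real) \<Rightarrow> (nat \<Rightarrow> real) \<Rightarrow> nat \<Rightarrow> real" where
  "gin E \<alpha> x v = Max ((\<lambda>u. \<alpha> u v + x v - x u) ` {u. (u, v) \<in> E})"

definition gout :: "(nat \<times> nat) set \<Rightarrow> (nat \<Rightarrow> nat \<Rightarrow> real) \<Rightarrow> (nat \<Rightarrow> real) \<Rightarrow> nat \<Rightarrow> real" where
  "gout E \<alpha> x v = Max ((\<lambda>w. \<alpha> v w + x w - x v) ` {w. (v, w) \<in> E})"

definition grho :: "(nat \<times> nat) set \<Rightarrow> (nat \<Rightarrow> nat \<Rightarrow> real) \<Rightarrow> (nat \<Rightarrow> real) \<Rightarrow> nat \<Rightarrow> real" where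
  "grho E \<alpha> x v = max 0 (gout E \<alpha> x v - gin E \<alpha> x v)"

locale P3 =
  fixes n :: nat and E :: "(nat \<times> nat) set" and \<alpha> :: "nat \<Rightarrow> nat \<Rightarrow> real"
    and s :: "nat \<Rightarrow> nat" and rstar :: "nat \<Rightarrow> real"
  assumes n2: "n \<ge> 2"
    and sc: "strongly_connected n E"
    and sV: "\<forall>t. s t \<in> {1..n}"
    and infm: "\<forall>v\<in>{1..n}. \<exists>\<^sub>\<infinity>t. s t = v"
    and lim: "\<forall>v\<in>{1..n}. (\<lambda>t. raised E \<alpha> s v t) \<longlonglongrightarrow> rstar v"
begin

lemma EV: "(a, b) \<in> E \<Longrightarrow> a \<in> {1..n} \<and> b \<in> {1..n}"
  using sc unfolding strongly_connected_def by auto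

lemma fin_in: "finite {u. (u, v) \<in> E}"
  by (rule finite_subset[of _ "{1..n}"]) (auto dest: EV)

lemma fin_out: "finite {w. (v, w) \<in> E}"
  by (rule finite_subset[of _ "{1..n}"]) (auto dest: EV)

lemma other: "v \<in> {1..n} \<Longrightarrow> \<exists>u\<in>{1..n}. u \<noteq> v"
proof (cases "v = 1")
  case True
  then show ?thesis using n2 by (intro bexI[of _ 2]) auto
next
  case False
  then show ?thesis using n2 by (intro bexI[of _ 1]) auto
qed

lemma has_in: "v \<in> {1..n} \<Longrightarrow> \<exists>u. (u, v) \<in> E"
proof -
  assume v: "v \<in> {1..n}"
  obtain u where u: "u \<in> {1..n}" "u \<noteq> v" using other[OF v] by blast
  have "(u, v) \<in> E\<^sup>*" using sc u v unfolding strongly_connected_def by blast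
  then show ?thesis using u(2) by (cases rule: rtranclE) auto
qed

lemma has_out: "v \<in> {1..n} \<Longrightarrow> \<exists>w. (v, w) \<in> E"
proof -
  assume v: "v \<in> {1..n}"
  obtain u where u: "u \<in> {1..n}" "u \<noteq> v" using other[OF v] by blast
  have "(v, u) \<in> E\<^sup>*" using sc u v unfolding strongly_connected_def by blast
  then show ?thesis using u(2) by (cases rule: converse_rtranclE) auto
qed

lemma gin_ge: "(u, v) \<in> E \<Longrightarrow> \<alpha> u v + x v - x u \<le> gin E \<alpha> x v"
  unfolding gin_def by (rule Max_ge) (auto simp: fin_in)

lemma gout_ge: "(v, w) \<in> E \<Longrightarrow> \<alpha> v w + x w - x v \<le> gout E \<alpha> x v"
  unfolding gout_def by (rule Max_ge) (auto simp: fin_out)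

lemma gin_att: "v \<in> {1..n} \<Longrightarrow> \<exists>u. (u, v) \<in> E \<and> gin E \<alpha> x v = \<alpha> u v + x v - x u"
proof -
  assume v: "v \<in> {1..n}"
  have "gin E \<alpha> x v \<in> (\<lambda>u. \<alpha> u v + x v - x u) ` {u. (u, v) \<in> E}"
    unfolding gin_def by (rule Max_in) (use has_in[OF v] fin_in in auto)
  then show ?thesis by auto
qed

lemma gout_att: "v \<in> {1..n} \<Longrightarrow> \<exists>w. (v, w) \<in> E \<and> gout E \<alpha> x v = \<alpha> v w + x w - x v"
proof -
  assume v: "v \<in> {1..n}"
  have "gout E \<alpha> x v \<in> (\<lambda>w. \<alpha> v w + x w - x v) ` {w. (v, w) \<in> E}"
    unfolding gout_def by (rule Max_in) (use has_out[OF v] fin_out in auto)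
  then show ?thesis by auto
qed

lemma gin_le: "v \<in> {1..n} \<Longrightarrow> (\<And>u. (u, v) \<in> E \<Longrightarrow> \<alpha> u v + x v - x u \<le> K) \<Longrightarrow> gin E \<alpha> x v \<le> K"
  using gin_att by metis

lemma gout_le: "v \<in> {1..n} \<Longrightarrow> (\<And>w. (v, w) \<in> E \<Longrightarrow> \<alpha> v w + x w - x v \<le> K) \<Longrightarrow> gout E \<alpha> x v \<le> K"
  using gout_att by metis

lemma r_Suc: "raised E \<alpha> s v (Suc t) = raised E \<alpha> s v t + (if s t = v then rhoR E (alpha_seq E \<alpha> s t) v / 2 else 0)"
  by (simp add: raised_def)

lemma r_0: "raised E \<alpha> s v 0 = 0"
  by (simp add: raised_def)

lemma aseq: "(a, b) \<in> E \<Longrightarrow> alpha_seq E \<alpha> s t a b = \<alpha> a b + raised E \<alpha> s b t - raised E \<alpha> s a t"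
proof (induction t arbitrary: a b)
  case 0
  then show ?case by (simp add: r_0)
next
  case (Suc t)
  show ?case
    using Suc.IH[OF Suc.prems] Suc.prems
    by (auto simp: raise_op_def r_Suc)
qed

definition R :: "nat \<Rightarrow> nat \<Rightarrow> real" where "R t = (\<lambda>v. raised E \<alpha> s v t)"

lemma rho_link: "rhoR E (alpha_seq E \<alpha> s t) v = grho E \<alpha> (R t) v"
proof -
  have 1: "{alpha_seq E \<alpha> s t u v | u. (u, v) \<in> E} = (\<lambda>u. \<alpha> u v + R t v - R t u) ` {u. (u, v) \<in> E}"
    by (auto simp: aseq R_def) (metis aseq)
  have 2: "{alpha_seq E \<alpha> s t v w | w. (v, w) \<in> E} = (\<lambda>w. \<alpha> v w + R t w - R t v) ` {w. (v, w) \<in> E}"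
    by (auto simp: aseq R_def) (metis aseq)
  show ?thesis unfolding rhoR_def alpha_in_def alpha_out_def grho_def gin_def gout_def 1 2 ..
qed

lemma rho0: "rhoR E \<alpha> v = grho E \<alpha> (\<lambda>_. 0) v"
proof -
  have 1: "{\<alpha> u v | u. (u, v) \<in> E} = (\<lambda>u. \<alpha> u v + 0 - 0) ` {u. (u, v) \<in> E}" by auto
  have 2: "{\<alpha> v w | w. (v, w) \<in> E} = (\<lambda>w. \<alpha> v w + 0 - 0) ` {w. (v, w) \<in> E}" by auto
  show ?thesis unfolding rhoR_def alpha_in_def alpha_out_def grho_def gin_def gout_def 1 2 ..
qed

lemma grho_nn: "0 \<le> grho E \<alpha> x v" by (simp add: grho_def)

lemma R_Suc: "R (Suc t) v = R t v + (if s t = v then grho E \<alpha> (R t) v / 2 else 0)"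
  by (simp add: R_def r_Suc rho_link[unfolded R_def])

lemma R_0: "R 0 v = 0" by (simp add: R_def r_0)

lemma R_mono: "incseq (\<lambda>t. R t v)"
  by (rule incseq_SucI) (simp add: R_Suc grho_nn)

lemma R_lim: "v \<in> {1..n} \<Longrightarrow> (\<lambda>t. R t v) \<longlonglongrightarrow> rstar v"
  using lim by (simp add: R_def)

lemma R_le: "v \<in> {1..n} \<Longrightarrow> R t v \<le> rstar v"
  using incseq_le[OF R_mono R_lim] .

lemma star_nn: "v \<in> {1..n} \<Longrightarrow> 0 \<le> rstar v"
  using R_le[of v 0] by (simp add: R_0)

lemma least:
  assumes q0: "\<forall>v\<in>{1..n}. 0 \<le> q v"
    and qs: "\<forall>v\<in>{1..n}. gout E \<alpha> q v \<le> gin E \<alpha> q v"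
    and v: "v \<in> {1..n}"
  shows "rstar v \<le> q v"
proof -
  have "\<forall>v\<in>{1..n}. R t v \<le> q v" for t
  proof (induction t)
    case 0
    show ?case using q0 by (simp add: R_0)
  next
    case (Suc t)
    show ?case
    proof
      fix v assume v: "v \<in> {1..n}"
      show "R (Suc t) v \<le> q v"
      proof (cases "s t = v")
        case False
        then show ?thesis using Suc v by (simp add: R_Suc)
      next
        case True
        define d where "d = q v - R t v"
        have d0: "0 \<le> d" using Suc v d_def by auto
        have o: "gout E \<alpha> (R t) v \<le> gout E \<alpha> q v + d"
        proof (rule gout_le[OF v])
          fix w assume w: "(v, w) \<in> E"
          have "R t w \<le> q w" using Suc EV[OF w] by auto
          then show "\<alpha> v w + R t w - R t v \<le> gout E \<alpha> q v + d"
            using gout_ge[OF w, of q] d_def by linarith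
        qed
        obtain u where u: "(u, v) \<in> E" "gin E \<alpha> q v = \<alpha> u v + q v - q u"
          using gin_att[OF v] by blast
        have "R t u \<le> q u" using Suc EV[OF u(1)] by auto
        then have i: "gin E \<alpha> q v - d \<le> gin E \<alpha> (R t) v"
          using gin_ge[OF u(1), of "R t"] u(2) d_def by linarith
        have qv: "gout E \<alpha> q v \<le> gin E \<alpha> q v" using qs v by blast
        have "grho E \<alpha> (R t) v \<le> 2 * d"
          unfolding grho_def using o i qv d0 by (intro max.boundedI) linarith+
        then show ?thesis using True by (simp add: R_Suc d_def)
      qed
    qed
  qed
  then have "\<forall>t. R t v \<le> q v" using v by blast
  then show ?thesis using LIMSEQ_le_const2[OF R_lim[OF v]] by blast
qed

lemma star_sup: "v \<in> {1..n} \<Longrightarrow> gout E \<alpha> rstar v \<le> gin E \<alpha> rstar v"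
proof (rule ccontr)
  assume v: "v \<in> {1..n}" and "\<not> gout E \<alpha> rstar v \<le> gin E \<alpha> rstar v"
  define \<delta> where "\<delta> = gout E \<alpha> rstar v - gin E \<alpha> rstar v"
  have \<delta>: "0 < \<delta>" using \<open>\<not> _\<close> \<delta>_def by linarith
  define D where "D = \<delta> / 10"
  have D: "0 < D" using \<delta> D_def by simp
  have "eventually (\<lambda>t. \<forall>w\<in>{1..n}. rstar w - D < R t w) sequentially"
  proof (rule eventually_ball_finite)
    show "finite {1..n}" by simp
    show "\<forall>w\<in>{1..n}. eventually (\<lambda>t. rstar w - D < R t w) sequentially"
    proof
      fix w assume w: "w \<in> {1..n}"
      show "eventually (\<lambda>t. rstar w - D < R t w) sequentially"
        by (rule order_tendstoD(1)[OF R_lim[OF w]]) (use D in simp)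
    qed
  qed
  then obtain N where N: "\<And>t. t \<ge> N \<Longrightarrow> \<forall>w\<in>{1..n}. rstar w - D < R t w"
    unfolding eventually_sequentially by blast
  obtain t where t: "t \<ge> N" "s t = v" using infm v unfolding INFM_nat_le by blast
  have o: "gout E \<alpha> rstar v \<le> gout E \<alpha> (R t) v + D"
  proof (rule gout_le[OF v])
    fix w assume w: "(v, w) \<in> E"
    have "rstar w - D < R t w" using N[OF t(1)] EV[OF w] by auto
    moreover have "R t v \<le> rstar v" using R_le[OF v] .
    ultimately show "\<alpha> v w + rstar w - rstar v \<le> gout E \<alpha> (R t) v + D"
      using gout_ge[OF w, of "R t"] by linarith
  qed
  obtain u where u: "(u, v) \<in> E" "gin E \<alpha> (R t) v = \<alpha> u v + R t v - R t u"
    using gin_att[OF v] by blast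
  have "rstar u - D < R t u" using N[OF t(1)] EV[OF u(1)] by auto
  moreover have "R t v \<le> rstar v" using R_le[OF v] .
  ultimately have i: "gin E \<alpha> (R t) v - D \<le> gin E \<alpha> rstar v"
    using gin_ge[OF u(1), of rstar] u(2) by linarith
  have g: "grho E \<alpha> (R t) v \<ge> \<delta> - 2 * D"
    using o i \<delta>_def unfolding grho_def by auto
  have "R (Suc t) v \<le> rstar v" using R_le[OF v] .
  moreover have "rstar v - D < R t v" using N[OF t(1)] v by auto
  moreover have "R (Suc t) v = R t v + grho E \<alpha> (R t) v / 2" using t(2) by (simp add: R_Suc)
  ultimately show False using g D_def \<delta> by linarith
qed

lemma gcl:
  assumes S: "S \<subseteq> {1..n}" "w0 \<in> S" and e: "0 < \<epsilon>" and ep: "\<forall>v\<in>S. \<epsilon> \<le> rstar v"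
    and bal: "\<forall>v\<in>S. gout E \<alpha> (\<lambda>x. if x \<in> S then rstar x - \<epsilon> else rstar x) v
                 \<le> gin E \<alpha> (\<lambda>x. if x \<in> S then rstar x - \<epsilon> else rstar x) v"
  shows False
proof -
  define q where "q = (\<lambda>x. if x \<in> S then rstar x - \<epsilon> else rstar x)"
  have qle: "q x \<le> rstar x" for x using e q_def by auto
  have q0: "\<forall>v\<in>{1..n}. 0 \<le> q v" using ep star_nn q_def by auto
  have qs: "\<forall>v\<in>{1..n}. gout E \<alpha> q v \<le> gin E \<alpha> q v"
  proof
    fix v assume v: "v \<in> {1..n}"
    show "gout E \<alpha> q v \<le> gin E \<alpha> q v"
    proof (cases "v \<in> S")
      case True
      then show ?thesis using bal q_def by simp
    next
      case False
      then have qv: "q v = rstar v" using q_def by simp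
      have "gout E \<alpha> q v \<le> gout E \<alpha> rstar v"
      proof (rule gout_le[OF v])
        fix w assume w: "(v, w) \<in> E"
        show "\<alpha> v w + q w - q v \<le> gout E \<alpha> rstar v"
          using gout_ge[OF w, of rstar] qle[of w] qv by linarith
      qed
      also have "\<dots> \<le> gin E \<alpha> rstar v" by (rule star_sup[OF v])
      also have "\<dots> \<le> gin E \<alpha> q v"
      proof -
        obtain u where u: "(u, v) \<in> E" "gin E \<alpha> rstar v = \<alpha> u v + rstar v - rstar u"
          using gin_att[OF v] by blast
        then show ?thesis using gin_ge[OF u(1), of q] qle[of u] qv by linarith
      qed
      finally show ?thesis .
    qed
  qed
  have "rstar w0 \<le> q w0" using least[OF q0 qs] S by blast
  then show False using q_def S e by simp
qed

lemma tight:
  assumes v: "v \<in> {1..n}" and pos: "0 < rstar v"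
  shows "gout E \<alpha> rstar v = gin E \<alpha> rstar v"
proof (rule ccontr)
  assume "gout E \<alpha> rstar v \<noteq> gin E \<alpha> rstar v"
  then have lt: "gout E \<alpha> rstar v < gin E \<alpha> rstar v" using star_sup[OF v] by linarith
  define \<epsilon> where "\<epsilon> = min (rstar v) ((gin E \<alpha> rstar v - gout E \<alpha> rstar v) / 2)"
  have e: "0 < \<epsilon>" using lt pos \<epsilon>_def by simp
  define q where "q = (\<lambda>x. if x \<in> {v} then rstar x - \<epsilon> else rstar x)"
  have o: "gout E \<alpha> q v \<le> gout E \<alpha> rstar v + \<epsilon>"
  proof (rule gout_le[OF v])
    fix w assume w: "(v, w) \<in> E"
    show "\<alpha> v w + q w - q v \<le> gout E \<alpha> rstar v + \<epsilon>"
      using gout_ge[OF w, of rstar] e by (cases "w = v") (auto simp: q_def)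
  qed
  obtain u where u: "(u, v) \<in> E" "gin E \<alpha> rstar v = \<alpha> u v + rstar v - rstar u"
    using gin_att[OF v] by blast
  have i: "gin E \<alpha> rstar v - \<epsilon> \<le> gin E \<alpha> q v"
    using gin_ge[OF u(1), of q] u(2) e by (cases "u = v") (auto simp: q_def)
  have eh: "\<epsilon> \<le> (gin E \<alpha> rstar v - gout E \<alpha> rstar v) / 2" unfolding \<epsilon>_def by (rule min.cobounded2)
  have "gout E \<alpha> q v \<le> gout E \<alpha> rstar v + \<epsilon>" by (rule o)
  also have "\<dots> \<le> gin E \<alpha> rstar v - \<epsilon>" using eh by (simp add: field_simps)
  also have "\<dots> \<le> gin E \<alpha> q v" by (rule i)
  finally have "gout E \<alpha> q v \<le> gin E \<alpha> q v" .
  then show False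
    using gcl[of "{v}" v \<epsilon>] v e \<epsilon>_def by (auto simp: q_def)
qed

lemma top_bound:
  assumes U: "U \<subseteq> {1..n}" and pos: "\<forall>u\<in>U. 0 < rstar u" and g: "0 < g"
    and cross: "\<And>a b. a \<in> U \<Longrightarrow> (a, b) \<in> E \<Longrightarrow> b \<notin> U \<Longrightarrow> \<alpha> a b + rstar b - rstar a \<le> K"
  shows "\<forall>v\<in>U. gin E \<alpha> rstar v \<le> K"
proof (rule ccontr)
  assume nc: "\<not> (\<forall>v\<in>U. gin E \<alpha> rstar v \<le> K)"
  have finU: "finite U" using U finite_subset by blast
  define \<Lambda> where "\<Lambda> = Max (gin E \<alpha> rstar ` U)"
  have LamGe: "\<forall>v\<in>U. gin E \<alpha> rstar v \<le> \<Lambda>" using finU \<Lambda>_def by auto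
  have Une: "U \<noteq> {}" using nc by auto
  have "\<Lambda> \<in> gin E \<alpha> rstar ` U" unfolding \<Lambda>_def using finU Une by (intro Max_in) auto
  then obtain t0 where t0: "t0 \<in> U" "gin E \<alpha> rstar t0 = \<Lambda>" by auto
  have LamGt: "K < \<Lambda>" using nc LamGe by force
  define T where "T = {v\<in>U. gin E \<alpha> rstar v = \<Lambda>}"
  have t0T: "t0 \<in> T" using t0 T_def by auto
  have TV: "T \<subseteq> {1..n}" using U T_def by auto
  have Tout: "\<forall>v\<in>T. gout E \<alpha> rstar v = \<Lambda>"
    using tight pos U T_def by fastforce
  define Oe where "Oe v w \<longleftrightarrow> (v, w) \<in> E \<and> \<alpha> v w + rstar w - rstar v = \<Lambda>" for v w
  have T1: "\<forall>v\<in>T. \<forall>w. Oe v w \<longrightarrow> w \<in> T"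
  proof (intro ballI allI impI)
    fix v w assume v: "v \<in> T" and o: "Oe v w"
    have e: "(v, w) \<in> E" and ew: "\<alpha> v w + rstar w - rstar v = \<Lambda>" using o Oe_def by auto
    have vU: "v \<in> U" using v T_def by auto
    have wU: "w \<in> U"
    proof (rule ccontr)
      assume "w \<notin> U"
      then have "\<alpha> v w + rstar w - rstar v \<le> K" using cross[OF vU e] by blast
      then show False using ew LamGt by linarith
    qed
    have "\<Lambda> \<le> gin E \<alpha> rstar w" using gin_ge[OF e, of rstar] ew by linarith
    then show "w \<in> T" using LamGe wU T_def by force
  qed
  have T2: "\<forall>v\<in>T. \<exists>w. Oe v w"
  proof
    fix v assume v: "v \<in> T"
    obtain w where "(v, w) \<in> E" "gout E \<alpha> rstar v = \<alpha> v w + rstar w - rstar v"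
      using gout_att TV v by blast
    then show "\<exists>w. Oe v w" using Tout v Oe_def by auto
  qed
  define Cl where "Cl S \<longleftrightarrow> S \<subseteq> T \<and> S \<noteq> {} \<and> (\<forall>v\<in>S. \<forall>w. Oe v w \<longrightarrow> w \<in> S)" for S
  have "Cl T" using Cl_def T1 t0T by auto
  then obtain S where S: "Cl S" and Smin: "\<forall>S'. Cl S' \<longrightarrow> card S \<le> card S'"
    using ex_has_least_nat[of Cl T card] by blast
  have finS: "finite S" using S Cl_def finU T_def finite_subset by (metis (no_types, lifting) mem_Collect_eq subsetI)
  define S' where "S' = {w\<in>S. \<exists>u\<in>S. Oe u w}"
  have "Cl S'"
  proof -
    have "S' \<subseteq> T" using S Cl_def S'_def by auto
    moreover have "S' \<noteq> {}"
    proof -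
      obtain v where v: "v \<in> S" using S Cl_def by auto
      then have "v \<in> T" using S Cl_def by auto
      then obtain w where "Oe v w" using T2 by blast
      then have "w \<in> S'" using S Cl_def S'_def v by auto
      then show ?thesis by auto
    qed
    moreover have "\<forall>v\<in>S'. \<forall>w. Oe v w \<longrightarrow> w \<in> S'"
      using S Cl_def S'_def by auto
    ultimately show ?thesis using Cl_def by auto
  qed
  then have "card S \<le> card S'" using Smin by blast
  moreover have "S' \<subseteq> S" using S'_def by auto
  ultimately have "S' = S" using finS card_seteq by blast
  then have Ied: "\<forall>w\<in>S. \<exists>u\<in>S. Oe u w" using S'_def by auto
  have SU: "S \<subseteq> U" using S Cl_def T_def by auto
  have SV: "S \<subseteq> {1..n}" using SU U by auto
  obtain w0 where w0: "w0 \<in> S" using S Cl_def by auto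
  define M where "M = (rstar ` S) \<union> (\<lambda>(v, w). \<Lambda> - (\<alpha> v w + rstar w - rstar v)) ` {(v, w). (v, w) \<in> E \<and> v \<in> S \<and> w \<notin> S}"
  have finE: "finite E" by (rule finite_subset[of _ "{1..n} \<times> {1..n}"]) (auto dest: EV)
  have finM: "finite M" unfolding M_def using finS
    by (intro finite_UnI finite_imageI) (auto intro: finite_subset[OF _ finE])
  have Mne: "M \<noteq> {}" using w0 M_def by auto
  have Mpos: "\<forall>x\<in>M. 0 < x"
  proof
    fix x assume "x \<in> M"
    then consider (a) v where "v \<in> S" "x = rstar v"
      | (b) v w where "(v, w) \<in> E" "v \<in> S" "w \<notin> S" "x = \<Lambda> - (\<alpha> v w + rstar w - rstar v)"
      unfolding M_def by auto
    then show "0 < x"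
    proof cases
      case a
      then show ?thesis using pos SU by auto
    next
      case b
      have vT: "v \<in> T" using b S Cl_def by auto
      have le: "\<alpha> v w + rstar w - rstar v \<le> \<Lambda>" using gout_ge[OF b(1), of rstar] Tout vT by auto
      have "\<not> Oe v w" using b S Cl_def by auto
      then have "\<alpha> v w + rstar w - rstar v \<noteq> \<Lambda>" using b(1) Oe_def by auto
      then show ?thesis using le b(4) by linarith
    qed
  qed
  define \<epsilon> where "\<epsilon> = Min M"
  have eM: "\<epsilon> \<in> M" unfolding \<epsilon>_def using finM Mne by (rule Min_in)
  have e0: "0 < \<epsilon>" using eM Mpos by auto
  have eple: "\<forall>v\<in>S. \<epsilon> \<le> rstar v" unfolding \<epsilon>_def using finM M_def by auto
  have eedge: "\<And>v w. (v, w) \<in> E \<Longrightarrow> v \<in> S \<Longrightarrow> w \<notin> S \<Longrightarrow> \<epsilon> \<le> \<Lambda> - (\<alpha> v w + rstar w - rstar v)"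
  proof -
    fix v w assume "(v, w) \<in> E" "v \<in> S" "w \<notin> S"
    then have "\<Lambda> - (\<alpha> v w + rstar w - rstar v) \<in> M" unfolding M_def by force
    then show "\<epsilon> \<le> \<Lambda> - (\<alpha> v w + rstar w - rstar v)" unfolding \<epsilon>_def using finM by auto
  qed
  define q where "q = (\<lambda>x. if x \<in> S then rstar x - \<epsilon> else rstar x)"
  have bal: "\<forall>v\<in>S. gout E \<alpha> q v \<le> gin E \<alpha> q v"
  proof
    fix v assume v: "v \<in> S"
    have vT: "v \<in> T" using v S Cl_def by auto
    have o: "gout E \<alpha> q v \<le> \<Lambda>"
    proof (rule gout_le)
      show "v \<in> {1..n}" using v SV by auto
      fix w assume w: "(v, w) \<in> E"
      show "\<alpha> v w + q w - q v \<le> \<Lambda>"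
      proof (cases "w \<in> S")
        case True
        then show ?thesis using gout_ge[OF w, of rstar] Tout vT v by (simp add: q_def)
      next
        case False
        then show ?thesis using eedge[OF w v False] v by (simp add: q_def)
      qed
    qed
    obtain u where u: "u \<in> S" "Oe u v" using Ied v by blast
    have "\<alpha> u v + q v - q u = \<Lambda>" using u v Oe_def by (simp add: q_def)
    then have "\<Lambda> \<le> gin E \<alpha> q v" using gin_ge[of u v q] u Oe_def by auto
    then show "gout E \<alpha> q v \<le> gin E \<alpha> q v" using o by linarith
  qed
  show False using gcl[OF SV w0 e0 eple] bal q_def by simp
qed

lemma cut:
  assumes U: "U \<subseteq> {1..n}" "U \<noteq> {}" and pos: "\<forall>u\<in>U. 0 < rstar u" and g: "0 < g"
    and gap: "\<forall>u\<in>U. \<forall>b\<in>{1..n} - U. rstar b + g \<le> rstar u"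
  shows "g \<le> (\<Sum>v\<in>{1..n}. grho E \<alpha> (\<lambda>_. 0) v)"
proof -
  define I0 where "I0 y = gin E \<alpha> (\<lambda>_. 0) y" for y
  define O0 where "O0 y = gout E \<alpha> (\<lambda>_. 0) y" for y
  define \<rho>0 where "\<rho>0 y = grho E \<alpha> (\<lambda>_. 0) y" for y
  have finU: "finite U" using U finite_subset by blast
  define \<Omega> where "\<Omega> = Max (O0 ` U)"
  have Om: "\<forall>a\<in>U. O0 a \<le> \<Omega>" using finU \<Omega>_def by auto
  have "\<Omega> \<in> O0 ` U" unfolding \<Omega>_def using finU U(2) by (intro Max_in) auto
  then obtain z where z: "z \<in> U" "O0 z = \<Omega>" by auto
  have cross: "\<alpha> a b + rstar b - rstar a \<le> \<Omega> - g" if a: "a \<in> U" and e: "(a, b) \<in> E" and b: "b \<notin> U" for a b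
  proof -
    have "b \<in> {1..n}" using EV[OF e] by auto
    then have "rstar b + g \<le> rstar a" using gap a b by auto
    moreover have "\<alpha> a b \<le> O0 a" using gout_ge[OF e, of "\<lambda>_. 0"] O0_def by simp
    ultimately show ?thesis using Om a by fastforce
  qed
  have inU: "\<forall>v\<in>U. gin E \<alpha> rstar v \<le> \<Omega> - g"
    by (rule top_bound[OF U(1) pos g]) (use cross in blast)
  define \<pi> where "\<pi> y = (SOME u. (u, y) \<in> E \<and> \<alpha> u y = I0 y)" for y
  have \<pi>: "(\<pi> y, y) \<in> E \<and> \<alpha> (\<pi> y) y = I0 y" if y: "y \<in> {1..n}" for y
  proof -
    obtain u where "(u, y) \<in> E" "I0 y = \<alpha> u y + 0 - 0" using gin_att[OF y, of "\<lambda>_. 0"] I0_def by auto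
    then have "\<exists>u. (u, y) \<in> E \<and> \<alpha> u y = I0 y" by auto
    then show ?thesis unfolding \<pi>_def by (rule someI_ex)
  qed
  define Y where "Y k = (\<pi> ^^ k) z" for k
  have Y0: "Y 0 = z" by (simp add: Y_def)
  have YS: "Y (Suc k) = \<pi> (Y k)" for k by (simp add: Y_def)
  have YV: "Y k \<in> {1..n}" for k
  proof (induction k)
    case 0 then show ?case using z U by (auto simp: Y0)
  next
    case (Suc k) then show ?case using \<pi>[OF Suc] EV YS by metis
  qed
  have rho_ge: "O0 y - I0 y \<le> \<rho>0 y" for y by (simp add: \<rho>0_def O0_def I0_def grho_def)
  have rho_nn: "0 \<le> \<rho>0 y" for y by (simp add: \<rho>0_def grho_nn)
  have tele: "O0 z - I0 (Y k) \<le> (\<Sum>i\<le>k. \<rho>0 (Y i))" for k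
  proof (induction k)
    case 0 then show ?case using rho_ge[of z] by (simp add: Y0)
  next
    case (Suc k)
    have e: "(Y (Suc k), Y k) \<in> E" and a: "\<alpha> (Y (Suc k)) (Y k) = I0 (Y k)" using \<pi>[OF YV[of k]] YS by auto
    have "I0 (Y k) \<le> O0 (Y (Suc k))" using gout_ge[OF e, of "\<lambda>_. 0"] a O0_def by simp
    then show ?case using Suc rho_ge[of "Y (Suc k)"] by simp
  qed
  define P where "P k \<longleftrightarrow> I0 (Y k) \<le> \<Omega> - g" for k
  have stepU: "P k \<or> Y (Suc k) \<in> U" if yk: "Y k \<in> U" for k
  proof (rule ccontr)
    assume "\<not> (P k \<or> Y (Suc k) \<in> U)"
    then have nP: "\<not> P k" and nU: "\<pi> (Y k) \<notin> U" using YS by auto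
    have e: "(\<pi> (Y k), Y k) \<in> E" and a: "\<alpha> (\<pi> (Y k)) (Y k) = I0 (Y k)" using \<pi>[OF YV[of k]] by auto
    have "\<pi> (Y k) \<in> {1..n}" using EV[OF e] by auto
    then have "rstar (\<pi> (Y k)) + g \<le> rstar (Y k)" using gap yk nU by auto
    moreover have "\<alpha> (\<pi> (Y k)) (Y k) + rstar (Y k) - rstar (\<pi> (Y k)) \<le> \<Omega> - g"
      using gin_ge[OF e, of rstar] inU yk by fastforce
    ultimately have "I0 (Y k) \<le> \<Omega> - g" using a g by linarith
    then show False using nP P_def by auto
  qed
  have exitL: "(\<forall>i<k. \<not> P i) \<Longrightarrow> \<forall>i\<le>k. Y i \<in> U" for k
  proof (induction k)
    case 0 then show ?case using z Y0 by auto
  next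
    case (Suc k)
    then have IH: "\<forall>i\<le>k. Y i \<in> U" by auto
    have "Y (Suc k) \<in> U" using stepU[of k] IH Suc.prems by auto
    then show ?case using IH le_Suc_eq by auto
  qed
  have cycL: "\<exists>l. i \<le> l \<and> l < j \<and> P l" if ij: "i < j" "Y i = Y j" and inu: "\<forall>l\<le>j. Y l \<in> U" for i j
  proof (rule ccontr)
    assume "\<not> (\<exists>l. i \<le> l \<and> l < j \<and> P l)"
    then have big: "\<forall>l\<in>{i..<j}. \<Omega> - g < I0 (Y l)" using P_def by auto
    have small: "I0 (Y l) \<le> (\<Omega> - g) + (rstar (Y (Suc l)) - rstar (Y l))" if l: "l \<in> {i..<j}" for l
    proof -
      have e: "(Y (Suc l), Y l) \<in> E" and a: "\<alpha> (Y (Suc l)) (Y l) = I0 (Y l)" using \<pi>[OF YV[of l]] YS by auto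
      have "Y l \<in> U" using inu l by auto
      then have "\<alpha> (Y (Suc l)) (Y l) + rstar (Y l) - rstar (Y (Suc l)) \<le> \<Omega> - g"
        using gin_ge[OF e, of rstar] inU by fastforce
      then show ?thesis using a by linarith
    qed
    have "(\<Sum>l=i..<j. \<Omega> - g) < (\<Sum>l=i..<j. I0 (Y l))"
      using big ij by (intro sum_strict_mono) auto
    also have "\<dots> \<le> (\<Sum>l=i..<j. (\<Omega> - g) + (rstar (Y (Suc l)) - rstar (Y l)))"
      using small by (intro sum_mono) auto
    also have "\<dots> = (\<Sum>l=i..<j. \<Omega> - g) + (\<Sum>l=i..<j. rstar (Y (Suc l)) - rstar (Y l))"
      by (rule sum.distrib)
    also have "(\<Sum>l=i..<j. rstar (Y (Suc l)) - rstar (Y l)) = rstar (Y j) - rstar (Y i)"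
      using sum_Suc_diff'[of i j "\<lambda>l. rstar (Y l)"] ij by simp
    finally show False using ij by simp
  qed
  have exP: "\<exists>k. P k"
  proof (rule ccontr)
    assume "\<nexists>k. P k"
    then have allU: "\<forall>i\<le>n. Y i \<in> U" using exitL[of n] by auto
    have "\<not> inj_on Y {..n}"
    proof
      assume inj: "inj_on Y {..n}"
      have "Y ` {..n} \<subseteq> {1..n}" using allU U by auto
      then have "card {..n} \<le> card {1..n}" using card_inj_on_le[OF inj, of "{1..n}"] by auto
      then show False by simp
    qed
    then obtain i j where ij: "i \<le> n" "j \<le> n" "i \<noteq> j" "Y i = Y j" unfolding inj_on_def by auto
    show False
    proof (cases "i < j")
      case True
      then show ?thesis using cycL[of i j] ij allU \<open>\<nexists>k. P k\<close> by auto
    next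
      case False
      then have "j < i" using ij by auto
      then show ?thesis using cycL[of j i] ij allU \<open>\<nexists>k. P k\<close> by auto
    qed
  qed
  define k0 where "k0 = (LEAST k. P k)"
  have Pk0: "P k0" unfolding k0_def using exP by (rule LeastI_ex)
  have nPk: "\<not> P i" if "i < k0" for i using not_less_Least[of i P] that k0_def by auto
  have allU: "\<forall>i\<le>k0. Y i \<in> U" using exitL[of k0] nPk by auto
  have inj: "inj_on Y {..k0}"
  proof (rule inj_onI, rule ccontr)
    fix i j assume i: "i \<in> {..k0}" and j: "j \<in> {..k0}" and eq: "Y i = Y j" and ne: "i \<noteq> j"
    show False
    proof (cases "i < j")
      case True
      then obtain l where "l < j" "P l" using cycL[of i j] eq allU j by auto
      then show ?thesis using nPk j by auto
    next
      case False
      then have "j < i" using ne by auto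
      then obtain l where "l < i" "P l" using cycL[of j i] eq allU i by auto
      then show ?thesis using nPk i by auto
    qed
  qed
  have "g \<le> O0 z - I0 (Y k0)" using Pk0 P_def z by auto
  also have "\<dots> \<le> (\<Sum>i\<le>k0. \<rho>0 (Y i))" by (rule tele)
  also have "\<dots> = (\<Sum>v\<in>Y ` {..k0}. \<rho>0 v)" using sum.reindex[OF inj, of \<rho>0] by simp
  also have "\<dots> \<le> (\<Sum>v\<in>{1..n}. \<rho>0 v)"
    using allU U(1) rho_nn by (intro sum_mono2) auto
  finally show ?thesis by (simp add: \<rho>0_def)
qed

lemma final:
  "(let y = (\<lambda>v. - rstar v) in Max (y ` {1..n}) - Min (y ` {1..n}))
     \<le> real (n - 1) * (\<Sum>v\<in>{1..n}. rhoR E \<alpha> v)"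
proof -
  define S where "S = (\<Sum>v\<in>{1..n}. grho E \<alpha> (\<lambda>_. 0) v)"
  have Seq: "(\<Sum>v\<in>{1..n}. rhoR E \<alpha> v) = S" unfolding S_def by (rule sum.cong) (auto simp: rho0)
  have S0: "0 \<le> S" unfolding S_def by (intro sum_nonneg) (simp add: grho_nn)
  define PV where "PV = rstar ` {1..n}"
  have finPV: "finite PV" and nePV: "PV \<noteq> {}" using n2 PV_def by auto
  define m0 where "m0 = Min PV"
  have m0le: "\<forall>x\<in>PV. m0 \<le> x" using finPV m0_def by auto
  have m0in: "m0 \<in> PV" using finPV nePV m0_def by auto
  have m0nn: "0 \<le> m0" using m0in star_nn PV_def by auto
  have main: "c - m0 \<le> real (card {v\<in>{1..n}. rstar v < c}) * S" if "c \<in> PV" for c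
    using that
  proof (induction "card {v\<in>{1..n}. rstar v < c}" arbitrary: c rule: less_induct)
    case less
    show ?case
    proof (cases "c = m0")
      case True
      then show ?thesis using S0 by simp
    next
      case False
      then have cgt: "m0 < c" using m0le less.prems by force
      define L where "L = {x\<in>PV. x < c}"
      have finL: "finite L" using finPV L_def by auto
      have neL: "L \<noteq> {}" using m0in cgt L_def by auto
      define c' where "c' = Max L"
      have c'L: "c' \<in> L" using finL neL c'_def by auto
      have c'lt: "c' < c" and c'P: "c' \<in> PV" using c'L L_def by auto
      have Lle: "\<forall>x\<in>L. x \<le> c'" using finL c'_def by auto
      define U where "U = {v\<in>{1..n}. c \<le> rstar v}"
      have UV: "U \<subseteq> {1..n}" using U_def by auto
      have Une: "U \<noteq> {}" using less.prems PV_def U_def by auto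
      have pos: "\<forall>u\<in>U. 0 < rstar u" using U_def cgt m0nn by fastforce
      have gap: "\<forall>u\<in>U. \<forall>b\<in>{1..n} - U. rstar b + (c - c') \<le> rstar u"
      proof (intro ballI)
        fix u b assume u: "u \<in> U" and b: "b \<in> {1..n} - U"
        have "rstar b \<in> L" using b U_def L_def PV_def by auto
        then have "rstar b \<le> c'" using Lle by auto
        then show "rstar b + (c - c') \<le> rstar u" using u U_def by auto
      qed
      have cutb: "c - c' \<le> S" unfolding S_def
        by (rule cut[OF UV Une pos _ gap]) (use c'lt in simp)
      obtain w where w: "w \<in> {1..n}" "rstar w = c'" using c'P PV_def by auto
      have sub: "{v\<in>{1..n}. rstar v < c'} \<subset> {v\<in>{1..n}. rstar v < c}"
        using c'lt w by auto
      have cardlt: "card {v\<in>{1..n}. rstar v < c'} < card {v\<in>{1..n}. rstar v < c}"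
        by (rule psubset_card_mono) (use sub in auto)
      have IH: "c' - m0 \<le> real (card {v\<in>{1..n}. rstar v < c'}) * S"
        using less.hyps[OF cardlt c'P] .
      have "real (card {v\<in>{1..n}. rstar v < c'}) * S \<le> (real (card {v\<in>{1..n}. rstar v < c}) - 1) * S"
        using cardlt S0 by (intro mult_right_mono) auto
      then show ?thesis using IH cutb by (simp add: algebra_simps)
    qed
  qed
  define M0 where "M0 = Max PV"
  have M0in: "M0 \<in> PV" using finPV nePV M0_def by auto
  have M0ge: "\<forall>x\<in>PV. x \<le> M0" using finPV M0_def by auto
  obtain w where w: "w \<in> {1..n}" "rstar w = M0" using M0in PV_def by auto
  have "{v\<in>{1..n}. rstar v < M0} \<subseteq> {1..n} - {w}" using w by auto
  then have "card {v\<in>{1..n}. rstar v < M0} \<le> card ({1..n} - {w})" by (intro card_mono) auto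
  also have "\<dots> = n - 1" using w by simp
  finally have cM: "card {v\<in>{1..n}. rstar v < M0} \<le> n - 1" .
  have "M0 - m0 \<le> real (card {v\<in>{1..n}. rstar v < M0}) * S" using main[OF M0in] .
  also have "\<dots> \<le> real (n - 1) * S" using cM S0 by (intro mult_right_mono) auto
  finally have hM: "M0 - m0 \<le> real (n - 1) * S" .
  define y where "y = (\<lambda>v. - rstar v)"
  have fy: "finite (y ` {1..n})" and ney: "y ` {1..n} \<noteq> {}" using n2 by auto
  obtain a where a: "a \<in> {1..n}" "Max (y ` {1..n}) = y a" using Max_in[OF fy ney] by auto
  obtain b where b: "b \<in> {1..n}" "Min (y ` {1..n}) = y b" using Min_in[OF fy ney] by auto
  have "rstar b \<le> M0" using M0ge b PV_def by auto
  moreover have "m0 \<le> rstar a" using m0le a PV_def by auto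
  ultimately have "Max (y ` {1..n}) - Min (y ` {1..n}) \<le> M0 - m0" using a b y_def by simp
  then show ?thesis using hM Seq y_def by (simp add: Let_def)
qed

end

theorem proposition3:
  fixes n :: nat and E :: "(nat \<times> nat) set" and \<alpha> :: "nat \<Rightarrow> nat \<Rightarrow> real"
    and s :: "nat \<Rightarrow> nat" and rstar :: "nat \<Rightarrow> real"
  assumes "n \<ge> 1"
    and "strongly_connected n E"
    and "\<forall>t. s t \<in> {1..n}"
    and "\<forall>v\<in>{1..n}. \<exists>\<^sub>\<infinity>t. s t = v"
    and "\<forall>v\<in>{1..n}. (\<lambda>t. raised E \<alpha> s v t) \<longlonglongrightarrow> rstar v"
  shows "(let y = (\<lambda>v. - rstar v) in Max (y ` {1..n}) - Min (y ` {1..n}))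
           \<le> real (n - 1) * (\<Sum>v\<in>{1..n}. rhoR E \<alpha> v)"
proof (cases "n = 1")
  case True
  then show ?thesis by (simp add: Let_def)
next
  case False
  then have "n \<ge> 2" using assms(1) by auto
  then interpret P3 n E \<alpha> s rstar
    using assms by unfold_locales auto
  show ?thesis by (rule final)
qed

end
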